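(* Let $\gamma>1$ and let $\Psi$ be a Borel probability measure on $\Delta_n$ such that $\Psi(\{\mathbf s\in\Delta_n:\mathbf a^\top\mathbf s=0\})=0$ for every nonzero $\mathbf a\in\mathbb R^n$. Define $\eta_{\mathbf x}=\int_{\Delta_n}(\mathbf x^\top\mathbf s)^\gamma\,\Psi(\mathrm d\mathbf s)$ for $\mathbf x\in[0,\infty)^n$, and assume $\eta_{\mathbf e_i}>0$ for $i=1,\dots,n$. Then the function $f(\mathbf w)=\eta_{\mathbf w}/\left(\sum_{i=1}^nw_i\eta_{\mathbf e_i}^{1/\gamma}\right)^\gamma$ has a unique minimizer on $\Delta_n$.
   Context: $\Delta_n=\{\mathbf x\in[0,1]^n:x_1+\dots+x_n=1\}$ and $\mathbf e_1,\dots,\mathbf e_n$ are the standard basis vectors of $\mathbb R^n$. *)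

theory Defs
  imports "HOL-Probability.Probability"
begin

definition std_simplex :: "(real^'n) set" where
  "std_simplex = {x. (\<forall>i. 0 \<le> x $ i \<and> x $ i \<le> 1) \<and> (\<Sum>i\<in>UNIV. x $ i) = 1}"

definition eta :: "(real^'n) measure \<Rightarrow> real \<Rightarrow> real^'n \<Rightarrow> real" where
  "eta Psi \<gamma> x = (LINT s:std_simplex|Psi. (x \<bullet> s) powr \<gamma>)"

definition fobj :: "(real^'n) measure \<Rightarrow> real \<Rightarrow> real^'n \<Rightarrow> real" where
  "fobj Psi \<gamma> w = eta Psi \<gamma> w /
     (\<Sum>i\<in>UNIV. w $ i * (eta Psi \<gamma> (axis i 1)) powr (1 / \<gamma>)) powr \<gamma>"

end

theory Submission
  imports Defs
begin

lemma simplex_mem: "s \<in> std_simplex \<Longrightarrow> 0 \<le> s $ i \<and> s $ i \<le> 1"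
  by (simp add: std_simplex_def)

lemma simplex_sum: "s \<in> std_simplex \<Longrightarrow> (\<Sum>i\<in>UNIV. s $ i) = 1"
  by (simp add: std_simplex_def)

lemma inner_simplex:
  assumes "x \<in> std_simplex" "s \<in> std_simplex"
  shows "0 \<le> x \<bullet> s \<and> x \<bullet> s \<le> 1"
proof -
  have e: "x \<bullet> s = (\<Sum>i\<in>UNIV. x $ i * s $ i)" by (simp add: inner_vec_def)
  have "0 \<le> (\<Sum>i\<in>UNIV. x $ i * s $ i)"
    using assms by (intro sum_nonneg) (simp add: simplex_mem)
  moreover have "(\<Sum>i\<in>UNIV. x $ i * s $ i) \<le> (\<Sum>i\<in>UNIV. s $ i)"
    using assms by (intro sum_mono) (simp add: simplex_mem mult_left_le_one_le)
  ultimately show ?thesis using e simplex_sum[OF assms(2)] by simp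
qed

lemma closed_simplex: "closed (std_simplex :: (real^'n) set)"
proof -
  have eq: "std_simplex = {x::real^'n. \<forall>i. 0 \<le> x $ i \<and> x $ i \<le> 1} \<inter> {x. (\<Sum>i\<in>UNIV. x $ i) = 1}"
    by (auto simp: std_simplex_def)
  have c1: "closed {x::real^'n. \<forall>i. 0 \<le> x $ i \<and> x $ i \<le> 1}"
  proof (rule closed_Collect_all)
    fix i
    have "{x::real^'n. 0 \<le> x $ i \<and> x $ i \<le> 1} = {x. x $ i \<ge> 0} \<inter> {x. x $ i \<le> 1}" by auto
    moreover have "closed ({x::real^'n. x $ i \<ge> 0} \<inter> {x. x $ i \<le> 1})"
      using closed_halfspace_component_ge_cart closed_halfspace_component_le_cart by (rule closed_Int)
    ultimately show "closed {x::real^'n. 0 \<le> x $ i \<and> x $ i \<le> 1}" by simp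
  qed
  have c2: "closed {x::real^'n. (\<Sum>i\<in>UNIV. x $ i) = 1}"
    by (intro closed_Collect_eq continuous_on_sum continuous_on_component continuous_on_id continuous_on_const)
  show ?thesis unfolding eq using c1 c2 by (rule closed_Int)
qed

lemma compact_simplex: "compact (std_simplex :: (real^'n) set)"
proof -
  have "std_simplex \<subseteq> cball (0::real^'n) 1"
  proof
    fix x :: "real^'n" assume x: "x \<in> std_simplex"
    have "norm x \<le> (\<Sum>i\<in>UNIV. \<bar>x $ i\<bar>)" by (rule norm_le_l1_cart)
    also have "\<dots> = 1" using x by (simp add: simplex_mem simplex_sum)
    finally show "x \<in> cball 0 1" by simp
  qed
  then have "bounded (std_simplex :: (real^'n) set)" by (rule bounded_subset[OF bounded_cball])
  then show ?thesis using closed_simplex by (simp add: compact_eq_bounded_closed)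
qed

lemma axis_simplex: "axis i 1 \<in> std_simplex"
  by (auto simp: std_simplex_def axis_def)

lemma meas:
  assumes "sets Psi = sets borel"
  shows "(\<lambda>s. indicator std_simplex s * ((x::real^'n) \<bullet> s) powr g) \<in> borel_measurable Psi"
proof -
  have [measurable]: "std_simplex \<in> sets (borel :: (real^'n) measure)"
    using closed_simplex by (rule borel_closed)
  have "(\<lambda>s. indicator std_simplex s * ((x::real^'n) \<bullet> s) powr g) \<in> borel_measurable borel"
    by measurable
  then show ?thesis using measurable_cong_sets[OF assms refl] by blast
qed

lemma integ:
  assumes "prob_space Psi" "sets Psi = sets borel" "x \<in> std_simplex" "g > 0"
  shows "integrable Psi (\<lambda>s. indicator std_simplex s * ((x::real^'n) \<bullet> s) powr g)"
proof -
  interpret prob_space Psi by fact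
  show ?thesis
  proof (rule integrable_const_bound[where B=1])
    show "AE s in Psi. norm (indicator std_simplex s * (x \<bullet> s) powr g) \<le> 1"
      using inner_simplex[OF assms(3)] assms(4)
      by (intro AE_I2) (auto simp: indicator_def intro: powr_le1)
  qed (rule meas[OF assms(2)])
qed

lemma powr_mid_strict:
  fixes p q g :: real assumes "g > 1" "0 \<le> p" "p < q"
  shows "((p+q)/2) powr g < (p powr g + q powr g)/2"
proof -
  define m where "m = (p+q)/2"
  have pm: "p < m" "m < q" using assms unfolding m_def by auto
  have cont: "continuous_on {a..b} (\<lambda>x. x powr g)" if "0 \<le> a" for a b :: real
    using that assms(1) by (intro continuous_on_powr' continuous_on_id continuous_on_const) auto
  have der: "((\<lambda>x. x powr g) has_derivative (*) (g * x powr (g-1))) (at x)" if "0 < x" for x :: real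
    using has_real_derivative_powr[OF that, of g] by (simp add: has_field_derivative_def)
  have d1: "((\<lambda>x. x powr g) has_derivative (*) (g * x powr (g-1))) (at x)" if "p < x" "x < m" for x
    using assms(2) that by (intro der) linarith
  have d2: "((\<lambda>x. x powr g) has_derivative (*) (g * x powr (g-1))) (at x)" if "m < x" "x < q" for x
    using assms(2) pm that by (intro der) linarith
  have m0: "0 \<le> m" using assms pm by linarith
  obtain z1 where z1: "p < z1" "z1 < m" "m powr g - p powr g = g * z1 powr (g-1) * (m - p)"
    using mvt[OF pm(1) cont[OF assms(2)] d1] by blast
  obtain z2 where z2: "m < z2" "z2 < q" "q powr g - m powr g = g * z2 powr (g-1) * (q - m)"
    using mvt[OF pm(2) cont[OF m0] d2] by blast
  have "z1 powr (g-1) < z2 powr (g-1)"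
    using z1 z2 assms by (intro powr_less_mono2) auto
  then have "g * z1 powr (g-1) < g * z2 powr (g-1)" using assms by simp
  moreover have qm: "q - m = m - p" unfolding m_def by (simp add: field_simps)
  ultimately have "g * z1 powr (g-1) * (m - p) < g * z2 powr (g-1) * (q - m)"
    unfolding qm using pm by (intro mult_strict_right_mono) auto
  then show ?thesis using z1 z2 unfolding m_def by simp
qed

lemma powr_mid_strict':
  fixes p q g :: real assumes "g > 1" "0 \<le> p" "0 \<le> q" "p \<noteq> q"
  shows "((p+q)/2) powr g < (p powr g + q powr g)/2"
  using powr_mid_strict[of g p q] powr_mid_strict[of g q p] assms
  by (cases "p < q") (auto simp: add.commute)

lemma powr_mid:
  fixes p q g :: real assumes "g > 1" "0 \<le> p" "0 \<le> q"
  shows "((p+q)/2) powr g \<le> (p powr g + q powr g)/2"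
  using powr_mid_strict'[OF assms] by (cases "p = q") auto

lemma eta_eq: "eta Psi g x = integral\<^sup>L Psi (\<lambda>s. indicator std_simplex s * (x \<bullet> s) powr g)"
  by (simp add: eta_def set_lebesgue_integral_def)

lemma eta_cont:
  assumes P: "prob_space Psi" and B: "sets Psi = sets borel" and g: "g > 0"
  shows "continuous_on std_simplex (eta Psi g :: real^'n \<Rightarrow> real)"
proof (rule continuous_on_sequentiallyI)
  fix u :: "nat \<Rightarrow> real^'n" and a
  assume u: "\<forall>n. u n \<in> std_simplex" and a: "a \<in> std_simplex" and lim: "u \<longlonglongrightarrow> a"
  interpret prob_space Psi by fact
  have "(\<lambda>n. integral\<^sup>L Psi (\<lambda>s. indicator std_simplex s * (u n \<bullet> s) powr g))
      \<longlonglongrightarrow> integral\<^sup>L Psi (\<lambda>s. indicator std_simplex s * (a \<bullet> s) powr g)"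
  proof (rule integral_dominated_convergence[where w="\<lambda>_. 1"])
    show "(\<lambda>s. indicator std_simplex s * (a \<bullet> s) powr g) \<in> borel_measurable Psi"
      by (rule meas[OF B])
    show "\<And>i. (\<lambda>s. indicator std_simplex s * (u i \<bullet> s) powr g) \<in> borel_measurable Psi"
      by (rule meas[OF B])
    show "integrable Psi (\<lambda>_. 1::real)" by simp
    show "AE s in Psi. (\<lambda>i. indicator std_simplex s * (u i \<bullet> s) powr g)
            \<longlonglongrightarrow> indicator std_simplex s * (a \<bullet> s) powr g"
    proof (rule AE_I2)
      fix s :: "real^'n"
      show "(\<lambda>i. indicator std_simplex s * (u i \<bullet> s) powr g)
            \<longlonglongrightarrow> indicator std_simplex s * (a \<bullet> s) powr g"
      proof (cases "s \<in> std_simplex")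
        case True
        have "continuous_on std_simplex (\<lambda>x. (x \<bullet> s) powr g)"
          using inner_simplex True g by (intro continuous_on_powr' continuous_on_inner continuous_on_id continuous_on_const) auto
        then have "(\<lambda>n. (u n \<bullet> s) powr g) \<longlonglongrightarrow> (a \<bullet> s) powr g"
          using u a lim unfolding continuous_on_sequentially by (auto simp: o_def)
        then show ?thesis by (intro tendsto_mult_left)
      qed simp
    qed
    show "AE s in Psi. norm (indicator std_simplex s * (u i \<bullet> s) powr g) \<le> 1" for i
    proof -
      have "\<forall>s\<in>std_simplex. (u i \<bullet> s) powr g \<le> 1"
        using inner_simplex[OF u[rule_format, of i]] g by (auto intro: powr_le1)
      then show ?thesis by (intro AE_I2) (auto simp: indicator_def)
    qed
  qed
  then show "(\<lambda>n. eta Psi g (u n)) \<longlonglongrightarrow> eta Psi g a" by (simp add: eta_eq)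
qed

theorem mainTheorem12:
  fixes Psi :: "(real^'n) measure" and \<gamma> :: real
  assumes "\<gamma> > 1"
    and "prob_space Psi"
    and "sets Psi = sets borel"
    and "measure Psi std_simplex = 1"
    and "\<And>a::real^'n. a \<noteq> 0 \<Longrightarrow> measure Psi {s\<in>std_simplex. a \<bullet> s = 0} = 0"
    and "\<And>i. eta Psi \<gamma> (axis i 1) > 0"
  shows "\<exists>!w. w \<in> std_simplex \<and> (\<forall>v\<in>std_simplex. fobj Psi \<gamma> w \<le> fobj Psi \<gamma> v)"
proof -
  note g = assms(1) and P = assms(2) and B = assms(3) and M1 = assms(4) and H = assms(5)
    and E = assms(6)
  interpret prob_space Psi by (rule P)
  define S where "S = (std_simplex :: (real^'n) set)"
  define c where "c i = eta Psi \<gamma> (axis i 1) powr (1/\<gamma>)" for i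
  define L where "L w = (\<Sum>i\<in>UNIV. w $ i * c i)" for w :: "real^'n"
  have cpos: "c i > 0" for i using E[of i] by (simp add: c_def)
  have F: "fobj Psi \<gamma> = (\<lambda>w. eta Psi \<gamma> w / L w powr \<gamma>)"
    by (rule ext) (simp add: fobj_def L_def c_def)
  have Lpos: "L w > 0" if w: "w \<in> S" for w
  proof -
    have "\<exists>i. w $ i \<noteq> 0"
    proof (rule ccontr)
      assume "\<not> (\<exists>i. w $ i \<noteq> 0)"
      then have "\<forall>i. w $ i = 0" by blast
      then show False using simplex_sum[of w] w unfolding S_def by simp
    qed
    then obtain i where "w $ i \<noteq> 0" by blast
    then have "w $ i > 0" using simplex_mem[of w i] w unfolding S_def by auto
    moreover have "0 \<le> w $ j * c j" for j
      using simplex_mem[of w j] cpos[of j] w unfolding S_def by (simp add: less_imp_le)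
    ultimately show ?thesis unfolding L_def
      using cpos[of i] by (intro sum_pos2[where i=i]) simp_all
  qed
  have Lcont: "continuous_on S L"
    unfolding L_def by (intro continuous_on_sum continuous_on_mult continuous_on_component continuous_on_id continuous_on_const)
  have fcont: "continuous_on S (fobj Psi \<gamma>)"
    unfolding F
  proof (intro continuous_on_divide continuous_on_powr' Lcont continuous_on_const)
    show "continuous_on S (eta Psi \<gamma>)" unfolding S_def using eta_cont[OF P B] g by simp
    show "\<forall>x\<in>S. 0 \<le> L x \<and> (L x = 0 \<longrightarrow> 0 < \<gamma>)" using Lpos by fastforce
    show "\<forall>x\<in>S. L x powr \<gamma> \<noteq> 0" using Lpos by fastforce
  qed
  obtain w where w: "w \<in> S" and wmin: "\<forall>v\<in>S. fobj Psi \<gamma> w \<le> fobj Psi \<gamma> v"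
    using continuous_attains_inf[OF _ _ fcont] compact_simplex axis_simplex unfolding S_def by blast
  have uniq: "v = w" if v: "v \<in> S" and vmin: "\<forall>x\<in>S. fobj Psi \<gamma> v \<le> fobj Psi \<gamma> x" for v
  proof (rule ccontr)
    assume ne: "v \<noteq> w"
    define m where "m = fobj Psi \<gamma> w"
    have fv: "fobj Psi \<gamma> v = m" using wmin vmin v w unfolding m_def by force
    define a where "a = L w"
    define b where "b = L v"
    have a: "a > 0" and b: "b > 0" using Lpos w v unfolding a_def b_def by auto
    define u where "u = (b/(a+b)) *\<^sub>R w + (a/(a+b)) *\<^sub>R v"
    have ui: "u $ i = b/(a+b) * w $ i + a/(a+b) * v $ i" for i by (simp add: u_def)
    have uS: "u \<in> S"
    proof -
      have "0 \<le> u $ i \<and> u $ i \<le> 1" for i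
      proof -
        have "b/(a+b) * w $ i \<le> b/(a+b)"
          by (rule mult_left_le) (use a b simplex_mem[of w i] w in \<open>auto simp: S_def\<close>)
        moreover have "a/(a+b) * v $ i \<le> a/(a+b)"
          by (rule mult_left_le) (use a b simplex_mem[of v i] v in \<open>auto simp: S_def\<close>)
        moreover have "b/(a+b) + a/(a+b) = 1"
        proof -
          have "b/(a+b) + a/(a+b) = (a+b)/(a+b)" by (simp add: add_divide_distrib[symmetric] add.commute)
          then show ?thesis using a b by simp
        qed
        ultimately show ?thesis unfolding ui
          using a b simplex_mem[of w i] simplex_mem[of v i] w v unfolding S_def by auto
      qed
      moreover have "(\<Sum>i\<in>UNIV. u $ i) = 1"
      proof -
        have "(\<Sum>i\<in>UNIV. u $ i) = b/(a+b) * (\<Sum>i\<in>UNIV. w $ i) + a/(a+b) * (\<Sum>i\<in>UNIV. v $ i)"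
          unfolding ui by (simp add: sum.distrib sum_distrib_left)
        also have "\<dots> = 1" using simplex_sum[of w] simplex_sum[of v] w v a b unfolding S_def
          by (simp add: divide_simps add_pos_pos)
        finally show ?thesis .
      qed
      ultimately show ?thesis unfolding S_def std_simplex_def by auto
    qed
    have Lu: "L u = 2*a*b/(a+b)"
    proof -
      have Llin: "L (s1 *\<^sub>R x + s2 *\<^sub>R y) = s1 * L x + s2 * L y" for s1 s2 x y
        unfolding L_def by (simp add: algebra_simps sum.distrib sum_distrib_left)
      have "L u = b/(a+b) * a + a/(a+b) * b"
        unfolding u_def Llin a_def b_def by (rule refl)
      then show ?thesis using a b by (simp add: divide_simps add_pos_pos)
    qed
    have Lupos: "L u > 0" using Lu a b by simp
    define d where "d = (1/a) *\<^sub>R w - (1/b) *\<^sub>R v"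
    have dne: "d \<noteq> 0"
    proof
      assume "d = 0"
      then have comp: "w $ i / a = v $ i / b" for i
        unfolding d_def by (auto simp: vec_eq_iff)
      have "(\<Sum>i\<in>UNIV. w $ i) / a = (\<Sum>i\<in>UNIV. v $ i) / b"
        unfolding sum_divide_distrib comp ..
      then have "a = b" using simplex_sum[of w] simplex_sum[of v] w v a b unfolding S_def
        by (simp add: field_simps)
      then have "w = v" using comp a by (simp add: vec_eq_iff)
      then show False using ne by simp
    qed
    define X where "X s = indicator S s * (u \<bullet> s) powr \<gamma> / L u powr \<gamma>" for s
    define Y where "Y s = (indicator S s * (w \<bullet> s) powr \<gamma> / a powr \<gamma>
                    + indicator S s * (v \<bullet> s) powr \<gamma> / b powr \<gamma>) / 2" for s
    have intX: "integrable Psi X" unfolding X_def S_def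
      using integ[OF P B uS[unfolded S_def]] g by simp
    have intY: "integrable Psi Y" unfolding Y_def S_def
      using integ[OF P B w[unfolded S_def]] integ[OF P B v[unfolded S_def]] g by simp
    have IX: "integral\<^sup>L Psi X = fobj Psi \<gamma> u" unfolding X_def F S_def eta_eq by simp
    have IY: "integral\<^sup>L Psi Y = m"
    proof -
      have "integral\<^sup>L Psi Y = (fobj Psi \<gamma> w + fobj Psi \<gamma> v) / 2"
        unfolding Y_def F S_def eta_eq a_def b_def
        using integ[OF P B w[unfolded S_def]] integ[OF P B v[unfolded S_def]] g by simp
      then show ?thesis using fv unfolding m_def by simp
    qed
    have pw: "X s = (((w \<bullet> s)/a + (v \<bullet> s)/b)/2) powr \<gamma> \<and>
              Y s = (((w \<bullet> s)/a) powr \<gamma> + ((v \<bullet> s)/b) powr \<gamma>)/2" if s: "s \<in> S" for s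
    proof -
      have us: "u \<bullet> s = b/(a+b) * (w \<bullet> s) + a/(a+b) * (v \<bullet> s)"
        unfolding u_def by (simp add: inner_add_left)
      have e: "(u \<bullet> s) / L u = ((w \<bullet> s)/a + (v \<bullet> s)/b)/2"
        unfolding us Lu using a b by (simp add: divide_simps add_pos_pos)
      have X1: "X s = ((u \<bullet> s) / L u) powr \<gamma>" unfolding X_def using s by (simp add: powr_divide)
      have Y1: "Y s = (((w \<bullet> s)/a) powr \<gamma> + ((v \<bullet> s)/b) powr \<gamma>)/2"
        unfolding Y_def using s by (simp add: powr_divide)
      show ?thesis using X1[unfolded e] Y1 by blast
    qed
    define A where "A = {s\<in>S. d \<bullet> s \<noteq> 0}"
    define Z where "Z = {s\<in>S. d \<bullet> s = 0}"
    have Sb[measurable]: "S \<in> sets borel" unfolding S_def using closed_simplex by (rule borel_closed)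
    have Ab: "A \<in> sets Psi" unfolding B A_def by measurable
    have Zb: "Z \<in> sets Psi" unfolding B Z_def by measurable
    have "measure Psi S = measure Psi A + measure Psi Z"
    proof -
      have "S = A \<union> Z" "A \<inter> Z = {}" unfolding A_def Z_def by auto
      then show ?thesis using finite_measure_Union[OF Ab Zb] by simp
    qed
    then have "measure Psi A = 1" using M1 H[OF dne] unfolding S_def Z_def by simp
    then have eA: "emeasure Psi A \<noteq> 0" using emeasure_eq_measure[of A] by simp
    have "integral\<^sup>L Psi X < integral\<^sup>L Psi Y"
    proof (rule integral_less_AE[OF intX intY eA Ab])
      show "AE s in Psi. s \<in> A \<longrightarrow> X s \<noteq> Y s"
      proof (rule AE_I2, rule impI)
        fix s assume sA: "s \<in> A"
        then have s: "s \<in> S" and ds: "d \<bullet> s \<noteq> 0" unfolding A_def by auto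
        have "(w \<bullet> s)/a - (v \<bullet> s)/b = d \<bullet> s" unfolding d_def by (simp add: inner_diff_left)
        then have "(w \<bullet> s)/a \<noteq> (v \<bullet> s)/b" using ds by auto
        moreover have "0 \<le> (w \<bullet> s)/a" "0 \<le> (v \<bullet> s)/b"
          using inner_simplex[of w s] inner_simplex[of v s] w v s a b unfolding S_def by auto
        ultimately have "(((w \<bullet> s)/a + (v \<bullet> s)/b)/2) powr \<gamma> < (((w \<bullet> s)/a) powr \<gamma> + ((v \<bullet> s)/b) powr \<gamma>)/2"
          using powr_mid_strict'[OF g] by blast
        then show "X s \<noteq> Y s"
          using conjunct1[OF pw[OF s]] conjunct2[OF pw[OF s]] by linarith
      qed
      show "AE s in Psi. X s \<le> Y s"
      proof (rule AE_I2)
        fix s show "X s \<le> Y s"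
        proof (cases "s \<in> S")
          case True
          have "0 \<le> (w \<bullet> s)/a" "0 \<le> (v \<bullet> s)/b"
            using inner_simplex[of w s] inner_simplex[of v s] w v True a b unfolding S_def by auto
          from powr_mid[OF g this] show ?thesis
            using conjunct1[OF pw[OF True]] conjunct2[OF pw[OF True]] by linarith
        qed (simp add: X_def Y_def)
      qed
    qed
    then have "fobj Psi \<gamma> u < m" using IX IY by simp
    moreover have "m \<le> fobj Psi \<gamma> u" using wmin uS unfolding m_def by blast
    ultimately show False by simp
  qed
  show ?thesis
    using w wmin uniq unfolding S_def by blast
qed

end
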